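(* Let $m\ge2$, $s,\ell,r_1,\dots,r_m\ge1$ be integers, $k=m\ell-s$ with $k\ge\ell$, and $n=\sum_{i=1}^m(\ell+r_i)$. If $q$ is a prime power with $q>2(n-k)\binom{n-1}{k-1}$, then there exists an $[n,k,\ell;r_1,\dots,r_m]$-PMDS code over $\mathbb{F}_q$.
   Context: An $[n,k]$-MDS code over a field $\mathbb{F}$ is a linear code in $\mathbb{F}^n$ of dimension $k$ and minimum Hamming distance $n-k+1$. PMDS codes: let $\ell,m,r_1,\dots,r_m$ be positive integers, $n=\sum_{i=1}^m(r_i+\ell)$, and $C\subseteq\mathbb{F}^n$ a linear code of dimension $k<n$ with generator matrix $G=(B_1\mid\dots\mid B_m)$, $B_i\in\mathbb{F}^{k\times(r_i+\ell)}$. Then $C$ is an $[n,k,\ell;r_1,\dots,r_m]$-PMDS code if (i) for each $i$ the row space of $B_i$ is an $[r_i+\ell,\ell]$-MDS code, and (ii) for any choice of $r_i$ erased coordinates in the $i$-th block for every $i$, the code obtained from $C$ by puncturing these coordinates is an $[m\ell,k]$-MDS code. *)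

theory Defs
  imports Main "HOL.Vector_Spaces" "HOL-Library.Function_Algebras"
begin

text \<open>Words of a code are functions nat => F; a code on the coordinate set I
  consists of words vanishing outside I.  The vector space structure is the
  coordinatewise one.\<close>

definition fscale :: "'a::field \<Rightarrow> (nat \<Rightarrow> 'a) \<Rightarrow> (nat \<Rightarrow> 'a)" where
  "fscale c v = (\<lambda>j. c * v j)"

definition zero_word :: "nat \<Rightarrow> 'a::field" where
  "zero_word = (\<lambda>_. 0)"

definition linear_code :: "nat set \<Rightarrow> (nat \<Rightarrow> 'a::field) set \<Rightarrow> bool" where
  "linear_code I C \<longleftrightarrow> finite I \<and> module.subspace fscale C \<and> (\<forall>v\<in>C. \<forall>j. j \<notin> I \<longrightarrow> v j = 0)"

definition code_dim :: "(nat \<Rightarrow> 'a::field) set \<Rightarrow> nat" where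
  "code_dim C = vector_space.dim fscale C"

definition hweight :: "nat set \<Rightarrow> (nat \<Rightarrow> 'a::field) \<Rightarrow> nat" where
  "hweight I v = card {j\<in>I. v j \<noteq> 0}"

text \<open>Minimum Hamming distance = minimum weight of a nonzero codeword (linear code).\<close>
definition min_dist :: "nat set \<Rightarrow> (nat \<Rightarrow> 'a::field) set \<Rightarrow> nat" where
  "min_dist I C = Min (hweight I ` (C - {zero_word}))"

definition mds_code :: "nat set \<Rightarrow> nat \<Rightarrow> (nat \<Rightarrow> 'a::field) set \<Rightarrow> bool" where
  "mds_code I k C \<longleftrightarrow> linear_code I C \<and> code_dim C = k \<and> C - {zero_word} \<noteq> {}
      \<and> min_dist I C = card I - k + 1"

definition puncture :: "nat set \<Rightarrow> (nat \<Rightarrow> 'a::field) set \<Rightarrow> (nat \<Rightarrow> 'a) set" where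
  "puncture J C = (\<lambda>v. (\<lambda>j. if j \<in> J then v j else 0)) ` C"

text \<open>Blocks: block i (0-based, i < m) has length l + r i, coordinates 0..<n.\<close>
definition blk_start :: "nat \<Rightarrow> (nat \<Rightarrow> nat) \<Rightarrow> nat \<Rightarrow> nat" where
  "blk_start l r i = (\<Sum>t<i. r t + l)"

definition blk :: "nat \<Rightarrow> (nat \<Rightarrow> nat) \<Rightarrow> nat \<Rightarrow> nat set" where
  "blk l r i = {blk_start l r i ..< blk_start l r i + (r i + l)}"

text \<open>[n,k,l; r_0,...,r_{m-1}]-PMDS code.  The row space of the block B_i of a
  generator matrix is exactly the code punctured to block i.\<close>
definition is_pmds :: "nat \<Rightarrow> nat \<Rightarrow> nat \<Rightarrow> nat \<Rightarrow> (nat \<Rightarrow> nat) \<Rightarrow> (nat \<Rightarrow> 'a::field) set \<Rightarrow> bool" where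
  "is_pmds n k l m r C \<longleftrightarrow>
     n = (\<Sum>i<m. r i + l) \<and> k < n \<and>
     linear_code {0..<n} C \<and> code_dim C = k \<and>
     (\<forall>i<m. mds_code (blk l r i) l (puncture (blk l r i) C)) \<and>
     (\<forall>E :: nat \<Rightarrow> nat set. (\<forall>i<m. E i \<subseteq> blk l r i \<and> card (E i) = r i) \<longrightarrow>
        mds_code ({0..<n} - (\<Union>i<m. E i)) k (puncture ({0..<n} - (\<Union>i<m. E i)) C))"

end

theory Submission
  imports Defs "HOL-Library.FuncSet" "HOL-Computational_Algebra.Polynomial"
begin

interpretation fv: vector_space "fscale :: 'a::field \<Rightarrow> (nat \<Rightarrow> 'a) \<Rightarrow> (nat \<Rightarrow> 'a)"
  by unfold_locales (auto simp: fscale_def fun_eq_iff algebra_simps)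

lemma zero_word_eq: "zero_word = 0"
  by (simp add: zero_word_def fun_eq_iff)

lemma sum_fun_apply: "(\<Sum>v\<in>A. (f v :: nat \<Rightarrow> 'a::comm_monoid_add)) x = (\<Sum>v\<in>A. f v x)"
  by (induction A rule: infinite_finite_induct) auto

definition XX :: "nat \<Rightarrow> (nat \<Rightarrow> 'a::field) set" where "XX d = {x. \<forall>t\<ge>d. x t = 0}"

lemma card_XX: "card (XX d :: (nat \<Rightarrow> 'a::{finite,field}) set) = card (UNIV::'a set) ^ d \<and> finite (XX d :: (nat \<Rightarrow> 'a) set)"
proof -
  have b: "bij_betw (\<lambda>x. restrict x {..<d}) (XX d :: (nat \<Rightarrow> 'a) set) (PiE {..<d} (\<lambda>_. UNIV))"
  proof (rule bij_betw_imageI)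
    show "inj_on (\<lambda>x. restrict x {..<d}) (XX d :: (nat \<Rightarrow> 'a) set)"
      by (auto simp: inj_on_def XX_def fun_eq_iff restrict_def) (metis not_le)
    show "(\<lambda>x. restrict x {..<d}) ` (XX d :: (nat \<Rightarrow> 'a) set) = PiE {..<d} (\<lambda>_. UNIV)"
    proof safe
      fix f :: "nat \<Rightarrow> 'a" assume "f \<in> PiE {..<d} (\<lambda>_. UNIV)"
      then show "f \<in> (\<lambda>x. restrict x {..<d}) ` XX d"
        by (intro image_eqI[of _ _ "\<lambda>t. if t < d then f t else 0"])
           (auto simp: XX_def restrict_def fun_eq_iff PiE_def extensional_def)
    qed (auto split: if_split_asm)
  qed
  have "card (PiE {..<d} (\<lambda>_. UNIV :: 'a set)) = card (UNIV::'a set) ^ d" by (simp add: card_PiE)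
  moreover have "finite (PiE {..<d} (\<lambda>_. UNIV :: 'a set))" by (simp add: finite_PiE)
  ultimately show ?thesis using b bij_betw_same_card bij_betw_finite by metis
qed

lemma card_span_indep:
  fixes B :: "(nat \<Rightarrow> 'a::{finite,field}) set"
  assumes "finite B" "fv.independent B"
  shows "card (fv.span B) = card (UNIV::'a set) ^ card B"
proof -
  let ?f = "\<lambda>u. \<Sum>v\<in>B. fscale (u v) v"
  have sp: "fv.span B = ?f ` PiE B (\<lambda>_. UNIV)"
  proof -
    have "fv.span B = range ?f" using fv.span_finite[OF assms(1)] .
    also have "\<dots> = ?f ` PiE B (\<lambda>_. UNIV)"
    proof safe
      fix u show "?f u \<in> ?f ` PiE B (\<lambda>_. UNIV)"
        by (intro image_eqI[of _ _ "restrict u B"]) (auto intro!: sum.cong simp: restrict_def)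
    qed auto
    finally show ?thesis .
  qed
  have inj: "inj_on ?f (PiE B (\<lambda>_. UNIV))"
  proof (rule inj_onI)
    fix u w assume u: "u \<in> PiE B (\<lambda>_. UNIV)" and w: "w \<in> PiE B (\<lambda>_. UNIV)" and e: "?f u = ?f w"
    have "(\<Sum>v\<in>B. fscale (u v - w v) v) = ?f u - ?f w"
      by (simp add: sum_fun_apply fun_eq_iff sum_subtractf[symmetric] fscale_def algebra_simps)
    then have z: "(\<Sum>v\<in>B. fscale (u v - w v) v) = 0" using e by simp
    have "\<forall>v\<in>B. u v - w v = 0"
      using fv.independentD[OF assms(2) assms(1) subset_refl z] by blast
    then show "u = w" using u w by (auto simp: PiE_def extensional_def fun_eq_iff)
  qed
  have "card (PiE B (\<lambda>_. UNIV :: 'a set)) = card (UNIV::'a set) ^ card B" using assms(1) by (simp add: card_PiE)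
  then show ?thesis unfolding sp card_image[OF inj] .
qed

lemma dim_by_card:
  fixes C :: "(nat \<Rightarrow> 'a::{finite,field}) set"
  assumes "fv.subspace C" "finite C" "card C = card (UNIV::'a set) ^ d"
  shows "code_dim C = d"
proof -
  obtain B where B: "B \<subseteq> C" "fv.independent B" "C \<subseteq> fv.span B" "card B = fv.dim C"
    using fv.basis_exists by blast
  have fB: "finite B" using B(1) assms(2) finite_subset by blast
  have "fv.span B \<subseteq> C" using fv.span_minimal[OF B(1) assms(1)] .
  then have "C = fv.span B" using B(3) by blast
  then have "card (UNIV::'a set) ^ card B = card (UNIV::'a set) ^ d" using card_span_indep[OF fB B(2)] assms(3) by simp
  moreover have "card (UNIV::'a set) \<ge> 2"
  proof -
    have "{0::'a, 1} \<subseteq> UNIV" by simp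
    then have "card {0::'a,1} \<le> card (UNIV::'a set)" by (intro card_mono) auto
    then show ?thesis by simp
  qed
  ultimately have "card B = d" using power_inject_exp[of "card (UNIV::'a set)" "card B" d] by linarith
  then show ?thesis using B(4) by (simp add: code_dim_def)
qed

definition ip :: "nat \<Rightarrow> (nat \<Rightarrow> 'a::field) \<Rightarrow> (nat \<Rightarrow> 'a) \<Rightarrow> 'a" where
  "ip d x y = (\<Sum>t<d. x t * y t)"

definition lcomb :: "(nat \<Rightarrow> nat \<Rightarrow> 'a::field) \<Rightarrow> nat set \<Rightarrow> (nat \<Rightarrow> 'a) \<Rightarrow> (nat \<Rightarrow> 'a)" where
  "lcomb h S c = (\<lambda>t. \<Sum>j\<in>S. c j * h j t)"

definition indep :: "(nat \<Rightarrow> nat \<Rightarrow> 'a::field) \<Rightarrow> nat set \<Rightarrow> bool" where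
  "indep h S \<longleftrightarrow> (\<forall>c. lcomb h S c = (\<lambda>_. 0) \<longrightarrow> (\<forall>j\<in>S. c j = 0))"

lemma ip_diff: "ip d (x - y) z = ip d x z - ip d y z"
  by (simp add: ip_def sum_subtractf[symmetric] algebra_simps)

lemma ip_add: "ip d (x + y) z = ip d x z + ip d y z"
  by (simp add: ip_def sum.distrib[symmetric] algebra_simps)

lemma ip_scale: "ip d (fscale c x) z = c * ip d x z"
  by (simp add: ip_def fscale_def sum_distrib_left algebra_simps)

lemma XX_diff: "x \<in> XX d \<Longrightarrow> y \<in> XX d \<Longrightarrow> x - y \<in> XX d"
  by (simp add: XX_def)

lemma XX_add: "x \<in> XX d \<Longrightarrow> y \<in> XX d \<Longrightarrow> x + y \<in> XX d"
  by (simp add: XX_def)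

lemma XX_scale: "x \<in> XX d \<Longrightarrow> fscale c x \<in> XX d"
  by (simp add: XX_def fscale_def)

lemma lcomb_XX: "(\<And>j. j \<in> S \<Longrightarrow> h j \<in> XX d) \<Longrightarrow> lcomb h S c \<in> XX d"
  by (simp add: XX_def lcomb_def)

lemma span_all:
  fixes h :: "nat \<Rightarrow> nat \<Rightarrow> 'a::{finite,field}"
  assumes hX: "\<And>j. j \<in> S \<Longrightarrow> h j \<in> XX d" and fS: "finite S" and cS: "card S = d" and ind: "indep h S"
    and z: "z \<in> XX d"
  shows "\<exists>c. z = lcomb h S c"
proof -
  have inj: "inj_on (lcomb h S) (PiE S (\<lambda>_. UNIV))"
  proof (rule inj_onI)
    fix u w assume u: "u \<in> PiE S (\<lambda>_. UNIV)" and w: "w \<in> PiE S (\<lambda>_. UNIV)" and e: "lcomb h S u = lcomb h S w"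
    have "lcomb h S (u - w) = (\<lambda>_. 0)"
      using e by (simp add: lcomb_def fun_eq_iff sum_subtractf left_diff_distrib)
    then have "\<forall>j\<in>S. (u - w) j = 0" using ind unfolding indep_def by blast
    then show "u = w" using u w by (auto simp: PiE_def extensional_def fun_eq_iff)
  qed
  have c1: "card (lcomb h S ` PiE S (\<lambda>_. UNIV)) = card (UNIV::'a set) ^ d"
    using card_image[OF inj] fS cS by (simp add: card_PiE)
  have sub: "lcomb h S ` PiE S (\<lambda>_. UNIV) \<subseteq> XX d" using lcomb_XX hX by blast
  have "lcomb h S ` PiE S (\<lambda>_. UNIV) = XX d"
    using card_subset_eq[OF conjunct2[OF card_XX[where 'a='a, of d]] sub] c1 conjunct1[OF card_XX[where 'a='a, of d]] by simp
  then show ?thesis using z by blast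
qed

lemma ip_lcomb: "ip d y (lcomb h S c) = (\<Sum>j\<in>S. c j * ip d y (h j))"
  unfolding ip_def lcomb_def
  by (simp add: sum_distrib_left sum_distrib_right sum.swap[of _ "{..<d}"] algebra_simps)

lemma indep_inj:
  fixes h :: "nat \<Rightarrow> nat \<Rightarrow> 'a::{finite,field}"
  assumes hX: "\<And>j. j \<in> S \<Longrightarrow> h j \<in> XX d" and fS: "finite S" and cS: "card S = d" and ind: "indep h S"
    and y: "y \<in> XX d" and v: "\<forall>j\<in>S. ip d y (h j) = 0"
  shows "y = 0"
proof (rule ext)
  fix t show "y t = 0 t"
  proof (cases "t < d")
    case True
    define e where "e = (\<lambda>s. if s = t then 1 else (0::'a))"
    have "e \<in> XX d" using True by (simp add: e_def XX_def)
    then obtain c where ec: "e = lcomb h S c" using span_all[OF hX fS cS ind] by blast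
    have "(\<Sum>ta<d. y ta * e ta) = (\<Sum>ta<d. if ta = t then y ta else 0)"
      by (intro sum.cong) (auto simp: e_def)
    then have "ip d y e = y t" using True by (simp add: ip_def)
    moreover have "ip d y e = 0" unfolding ec ip_lcomb using v by simp
    ultimately show ?thesis by simp
  next
    case False then show ?thesis using y by (simp add: XX_def)
  qed
qed

lemma pigeon_vanish:
  fixes h :: "nat \<Rightarrow> nat \<Rightarrow> 'a::{finite,field}"
  assumes fS: "finite S" and cS: "card S < d"
  shows "\<exists>y\<in>XX d. y \<noteq> 0 \<and> (\<forall>j\<in>S. ip d y (h j) = 0)"
proof -
  define \<phi> where "\<phi> = (\<lambda>y::nat \<Rightarrow> 'a. restrict (\<lambda>j. ip d y (h j)) S)"
  have q2: "card (UNIV::'a set) \<ge> 2"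
  proof -
    have "card {0::'a,1} \<le> card (UNIV::'a set)" by (intro card_mono) auto
    then show ?thesis by simp
  qed
  have sub: "\<phi> ` XX d \<subseteq> PiE S (\<lambda>_. UNIV)" by (auto simp: \<phi>_def)
  have "card (\<phi> ` XX d) \<le> card (PiE S (\<lambda>_. UNIV :: 'a set))"
    by (rule card_mono[OF _ sub]) (simp add: finite_PiE fS)
  also have "\<dots> = card (UNIV::'a set) ^ card S" using fS by (simp add: card_PiE)
  finally have "card (\<phi> ` XX d) \<le> card (UNIV::'a set) ^ card S" .
  also have "\<dots> < card (UNIV::'a set) ^ d" using q2 cS by (intro power_strict_increasing) auto
  finally have lt: "card (\<phi> ` XX d) < card (UNIV::'a set) ^ d" .
  have "\<not> inj_on \<phi> (XX d)"
  proof
    assume "inj_on \<phi> (XX d)"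
    then have "card (\<phi> ` XX d) = card (XX d :: (nat \<Rightarrow> 'a) set)" by (rule card_image)
    then show False using lt card_XX[where 'a='a] by simp
  qed
  then obtain y1 y2 where y: "y1 \<in> XX d" "y2 \<in> XX d" "y1 \<noteq> y2" "\<phi> y1 = \<phi> y2"
    unfolding inj_on_def by blast
  have "\<forall>j\<in>S. ip d (y1 - y2) (h j) = 0"
  proof
    fix j assume "j \<in> S"
    then have "ip d y1 (h j) = ip d y2 (h j)" using fun_cong[OF y(4), of j] unfolding \<phi>_def by simp
    then show "ip d (y1 - y2) (h j) = 0" by (simp add: ip_diff)
  qed
  then show ?thesis using y XX_diff by (intro bexI[of _ "y1 - y2"]) auto
qed

definition enc :: "nat set \<Rightarrow> (nat \<Rightarrow> nat \<Rightarrow> 'a::field) \<Rightarrow> nat \<Rightarrow> (nat \<Rightarrow> 'a) \<Rightarrow> (nat \<Rightarrow> 'a)" where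
  "enc I h d x = (\<lambda>j. if j \<in> I then ip d x (h j) else 0)"

definition code_set :: "nat set \<Rightarrow> (nat \<Rightarrow> nat \<Rightarrow> 'a::field) \<Rightarrow> nat \<Rightarrow> (nat \<Rightarrow> 'a) set" where
  "code_set I h d = enc I h d ` XX d"

lemma enc_diff: "enc I h d (x - y) = enc I h d x - enc I h d y"
  by (simp add: enc_def fun_eq_iff ip_diff)

lemma enc_add: "enc I h d (x + y) = enc I h d x + enc I h d y"
  by (simp add: enc_def fun_eq_iff ip_add)

lemma enc_scale: "enc I h d (fscale c x) = fscale c (enc I h d x)"
  by (simp add: enc_def fun_eq_iff ip_scale[unfolded fscale_def] fscale_def)

lemma enc_zero: "enc I h d 0 = 0"
  by (simp add: enc_def fun_eq_iff ip_def)

lemma code_linear: "finite I \<Longrightarrow> linear_code I (code_set I h d)"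
  unfolding linear_code_def
proof (intro conjI)
  show "fv.subspace (code_set I h d)"
    unfolding fv.subspace_def code_set_def
  proof (intro conjI ballI allI)
    have "0 \<in> XX d" by (simp add: XX_def)
    then show "0 \<in> enc I h d ` XX d" using enc_zero[of I h d] by force
    fix x y assume "x \<in> enc I h d ` XX d" "y \<in> enc I h d ` XX d"
    then obtain x' y' where "x' \<in> XX d" "y' \<in> XX d" "x = enc I h d x'" "y = enc I h d y'" by blast
    then show "x + y \<in> enc I h d ` XX d"
      using enc_add[of I h d x' y'] XX_add[of x' d y'] rev_image_eqI[of "x' + y'" "XX d" "x + y" "enc I h d"] by simp
  next
    fix c x assume "x \<in> enc I h d ` XX d"
    then obtain x' where "x' \<in> XX d" "x = enc I h d x'" by blast
    then show "fscale c x \<in> enc I h d ` XX d"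
      using enc_scale[of I h d c x'] XX_scale[of x' d c] rev_image_eqI[of "fscale c x'" "XX d" "fscale c x" "enc I h d"] by simp
  qed
qed (auto simp: code_set_def enc_def)

lemma enc_inj:
  fixes h :: "nat \<Rightarrow> nat \<Rightarrow> 'a::{finite,field}"
  assumes S: "S \<subseteq> I" and inj: "\<forall>y\<in>XX d. (\<forall>j\<in>S. ip d y (h j) = 0) \<longrightarrow> y = 0"
  shows "inj_on (enc I h d) (XX d)"
proof (rule inj_onI)
  fix x y assume x: "x \<in> XX d" and y: "y \<in> XX d" and e: "enc I h d x = enc I h d y"
  have eq: "enc I h d (x - y) = 0" using e by (simp add: enc_diff)
  have "\<forall>j\<in>S. ip d (x - y) (h j) = 0"
  proof
    fix j assume "j \<in> S"
    with S have "j \<in> I" by auto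
    with fun_cong[OF eq, of j] show "ip d (x - y) (h j) = 0" by (simp add: enc_def)
  qed
  then have "x - y = 0" using inj XX_diff[OF x y] by blast
  then show "x = y" by simp
qed

lemma code_dim_set:
  fixes h :: "nat \<Rightarrow> nat \<Rightarrow> 'a::{finite,field}"
  assumes fI: "finite I" and S: "S \<subseteq> I" and inj: "\<forall>y\<in>XX d. (\<forall>j\<in>S. ip d y (h j) = 0) \<longrightarrow> y = 0"
  shows "code_dim (code_set I h d) = d" "card (code_set I h d) = card (UNIV::'a set) ^ d"
proof -
  show c: "card (code_set I h d) = card (UNIV::'a set) ^ d"
    unfolding code_set_def using card_image[OF enc_inj[OF S inj]] card_XX[where 'a='a] by simp
  have "finite (code_set I h d)" unfolding code_set_def using card_XX by blast
  then show "code_dim (code_set I h d) = d"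
    using dim_by_card[OF _ _ c] code_linear[OF fI] unfolding linear_code_def by blast
qed

lemma puncture_code: "J \<subseteq> I \<Longrightarrow> puncture J (code_set I h d) = code_set J h d"
  unfolding puncture_def code_set_def image_image
  by (intro image_cong refl) (auto simp: enc_def fun_eq_iff)


lemma weight_lower:
  fixes h :: "nat \<Rightarrow> nat \<Rightarrow> 'a::{finite,field}"
  assumes fI: "finite I"
    and H: "\<And>S. S \<subseteq> I \<Longrightarrow> card S = d \<Longrightarrow> \<forall>y\<in>XX d. (\<forall>j\<in>S. ip d y (h j) = 0) \<longrightarrow> y = 0"
    and y: "y \<in> XX d" and nz: "enc I h d y \<noteq> 0"
  shows "card {j\<in>I. enc I h d y j = 0} < d"
proof (rule ccontr)
  let ?Z = "{j\<in>I. enc I h d y j = 0}"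
  assume "\<not> card ?Z < d"
  then obtain S where S: "S \<subseteq> ?Z" "card S = d" by (meson not_less obtain_subset_with_card_n)
  have "S \<subseteq> I" using S by auto
  moreover have "\<forall>j\<in>S. ip d y (h j) = 0" using S(1) by (auto simp: enc_def)
  ultimately have "y = 0" using H[of S] S(2) y by blast
  then have "enc I h d y = enc I h d 0" by simp
  then show False using nz enc_zero[of I h d] by simp
qed

lemma hweight_eq: "finite I \<Longrightarrow> hweight I v = card I - card {j\<in>I. v j = 0}"
proof -
  assume fI: "finite I"
  have "{j\<in>I. v j \<noteq> 0} = I - {j\<in>I. v j = 0}" by auto
  then show ?thesis unfolding hweight_def using card_Diff_subset[of "{j\<in>I. v j = 0}" I] fI by simp
qed

lemma mds_lemma:
  fixes h :: "nat \<Rightarrow> nat \<Rightarrow> 'a::{finite,field}"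
  assumes fI: "finite I" and d1: "d \<ge> 1" and dI: "d \<le> card I"
    and H: "\<And>S. S \<subseteq> I \<Longrightarrow> card S = d \<Longrightarrow> \<forall>y\<in>XX d. (\<forall>j\<in>S. ip d y (h j) = 0) \<longrightarrow> y = 0"
  shows "mds_code I d (code_set I h d)"
proof -
  obtain S0 where S0: "S0 \<subseteq> I" "card S0 = d" using obtain_subset_with_card_n[OF dI] by blast
  have Hs: "\<forall>y\<in>XX d. (\<forall>j\<in>S0. ip d y (h j) = 0) \<longrightarrow> y = 0" using H[OF S0] .
  have injE: "inj_on (enc I h d) (XX d)" by (rule enc_inj[OF S0(1) Hs])
  have dim: "code_dim (code_set I h d) = d" by (rule code_dim_set(1)[OF fI S0(1) Hs])
  have lin: "linear_code I (code_set I h d)" by (rule code_linear[OF fI])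
  have finC: "finite (code_set I h d)" unfolding code_set_def using card_XX[where 'a='a] by blast
  have "d - 1 \<le> card I" using dI by simp
  then obtain S1 where S1: "S1 \<subseteq> I" "card S1 = d - 1" "finite S1"
    by (rule obtain_subset_with_card_n)
  obtain y where y: "y \<in> XX d" "y \<noteq> 0" "\<forall>j\<in>S1. ip d y (h j) = 0"
    using pigeon_vanish[OF S1(3), of d h] S1(2) d1 by auto
  have "0 \<in> XX d" by (simp add: XX_def)
  then have ynz: "enc I h d y \<noteq> 0" using injE y enc_zero[of I h d] unfolding inj_on_def by metis
  have yC: "enc I h d y \<in> code_set I h d - {zero_word}" using y ynz by (auto simp: code_set_def zero_word_eq)
  have lowy: "card {j\<in>I. enc I h d y j = 0} < d" by (rule weight_lower[OF fI H y(1) ynz])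
  have "S1 \<subseteq> {j\<in>I. enc I h d y j = 0}" using S1 y(3) by (auto simp: enc_def)
  then have "d - 1 \<le> card {j\<in>I. enc I h d y j = 0}"
    using S1(2) card_mono[of "{j\<in>I. enc I h d y j = 0}" S1] fI by auto
  then have "card {j\<in>I. enc I h d y j = 0} = d - 1" using lowy by linarith
  then have wy: "hweight I (enc I h d y) = card I - d + 1"
    using hweight_eq[OF fI, of "enc I h d y"] d1 dI by simp
  have "min_dist I (code_set I h d) = card I - d + 1"
    unfolding min_dist_def
  proof (rule Min_eqI)
    show "finite (hweight I ` (code_set I h d - {zero_word}))" using finC by simp
    show "card I - d + 1 \<in> hweight I ` (code_set I h d - {zero_word})" using yC wy by force
    fix w assume "w \<in> hweight I ` (code_set I h d - {zero_word})"
    then obtain x where x: "x \<in> XX d" "enc I h d x \<noteq> 0" "w = hweight I (enc I h d x)"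
      by (auto simp: code_set_def zero_word_eq)
    have "card {j\<in>I. enc I h d x j = 0} < d" by (rule weight_lower[OF fI H x(1) x(2)])
    then show "card I - d + 1 \<le> w" using x(3) hweight_eq[OF fI, of "enc I h d x"] dI d1 by arith
  qed
  then show ?thesis unfolding mds_code_def using lin dim yC by blast
qed

lemma vdm_indep:
  fixes z :: "nat \<Rightarrow> 'a::field"
  assumes fS: "finite S" and inj: "inj_on z S" and cu: "card S \<le> u"
    and e: "\<forall>t<u. (\<Sum>j\<in>S. c j * z j ^ t) = 0"
  shows "\<forall>j\<in>S. c j = 0"
proof
  fix j0 assume j0: "j0 \<in> S"
  define p where "p = (\<Prod>j\<in>S - {j0}. [:- z j, 1:])"
  have "degree p \<le> sum (degree \<circ> (\<lambda>j. [:- z j, 1:])) (S - {j0})"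
    unfolding p_def using fS by (intro degree_prod_sum_le) auto
  also have "\<dots> = card (S - {j0})" by simp
  also have "\<dots> < u" using cu j0 fS card_Diff1_less[of S j0] by linarith
  finally have dp: "degree p < u" .
  have "(\<Sum>j\<in>S. c j * poly p (z j)) = (\<Sum>j\<in>S. \<Sum>i\<le>degree p. coeff p i * (c j * z j ^ i))"
    by (simp add: poly_altdef sum_distrib_left algebra_simps)
  also have "\<dots> = (\<Sum>i\<le>degree p. coeff p i * (\<Sum>j\<in>S. c j * z j ^ i))"
    by (subst sum.swap) (simp add: sum_distrib_left)
  also have "\<dots> = 0" using e dp by (intro sum.neutral) auto
  finally have s0: "(\<Sum>j\<in>S. c j * poly p (z j)) = 0" .
  have pz: "poly p (z j) = 0" if "j \<in> S - {j0}" for j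
    unfolding p_def poly_prod using that fS by (intro prod_zero) auto
  have "(\<Sum>j\<in>S. c j * poly p (z j)) = c j0 * poly p (z j0) + (\<Sum>j\<in>S - {j0}. c j * poly p (z j))"
    using sum.remove[OF fS j0] by blast
  also have "(\<Sum>j\<in>S - {j0}. c j * poly p (z j)) = 0" using pz by (intro sum.neutral) auto
  finally have "c j0 * poly p (z j0) = 0" using s0 by simp
  moreover have "poly p (z j0) \<noteq> 0"
    unfolding p_def poly_prod using fS inj j0
    by (subst prod_zero_iff) (auto simp: inj_on_def)
  ultimately show "c j0 = 0" by simp
qed

lemma binom_step: "(N choose Suc K) * Suc K = (N choose K) * (N - K)"
  using binomial_absorption[of K N] binomial_absorb_comp[of N K] by (simp add: mult.commute)

lemma sum_bound_step:
  fixes q n k :: nat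
  assumes q: "q \<ge> 2 * k"
  shows "1 \<le> K \<Longrightarrow> K \<le> k \<Longrightarrow> K \<le> n \<Longrightarrow> (\<Sum>j\<in>{1..K}. (n choose j) * q ^ (j - 1)) \<le> 2 * (n choose K) * q ^ (K - 1)"
proof (induction K)
  case 0 then show ?case by simp
next
  case (Suc K)
  show ?case
  proof (cases "K = 0")
    case True then show ?thesis by simp
  next
    case False
    have IH: "(\<Sum>j\<in>{1..K}. (n choose j) * q ^ (j - 1)) \<le> 2 * (n choose K) * q ^ (K - 1)"
      using Suc False by simp
    have "2 * Suc K \<le> (n - K) * q" using q Suc.prems
    proof -
      have "2 * Suc K \<le> 2 * k" using Suc.prems by simp
      then have "2 * Suc K \<le> q" using q by linarith
      moreover have "1 \<le> n - K" using Suc.prems by simp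
      ultimately show ?thesis by (metis dual_order.trans mult_1 mult_le_mono1)
    qed
    then have "(n choose K) * (2 * Suc K) \<le> (n choose K) * ((n - K) * q)" by (rule mult_le_mono2)
    also have "\<dots> = ((n choose Suc K) * Suc K) * q" using binom_step[of n K] by simp
    finally have "(2 * (n choose K)) * Suc K \<le> ((n choose Suc K) * q) * Suc K" by (simp add: algebra_simps)
    then have key: "2 * (n choose K) \<le> (n choose Suc K) * q" by (metis mult_le_cancel2 zero_less_Suc)
    have s1: "(\<Sum>j\<in>{1..Suc K}. (n choose j) * q ^ (j - 1)) = (\<Sum>j\<in>{1..K}. (n choose j) * q ^ (j - 1)) + (n choose Suc K) * q ^ K"
      by simp
    have b1: "2 * (n choose K) * q ^ (K - 1) \<le> (n choose Suc K) * q * q ^ (K - 1)"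
      using key by (rule mult_le_mono1)
    have b2: "(n choose Suc K) * q * q ^ (K - 1) = (n choose Suc K) * q ^ K"
      using False by (cases K) auto
    have "(\<Sum>j\<in>{1..K}. (n choose j) * q ^ (j - 1)) + (n choose Suc K) * q ^ K \<le> 2 * ((n choose Suc K) * q ^ K)"
      using IH b1 b2 by linarith
    then show ?thesis unfolding s1 by (simp add: mult.assoc)
  qed
qed

lemma numeric:
  fixes q n k :: nat
  assumes q: "q > 2 * (n - k) * ((n - 1) choose (k - 1))" and k1: "k \<ge> 1" and nk: "n \<ge> k + 3"
  shows "(\<Sum>j\<in>{1..k}. (n choose j) * q ^ (j - 1)) < q ^ k"
proof (cases "k = 1")
  case True
  then show ?thesis using q nk by simp
next
  case False
  then have k2: "k \<ge> 2" using k1 by simp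
  have c1: "((n - 1) choose k) * k = ((n - 1) choose (k - 1)) * (n - k)"
    using binom_step[of "n - 1" "k - 1"] k1 by (simp add: Suc_diff_le)
  have "k \<le> n - 1" using nk by simp
  then have "0 < (n - 1) choose k" by (rule zero_less_binomial)
  then have "((n - 1) choose k) \<ge> 1" by linarith
  then have "k \<le> ((n - 1) choose k) * k" by simp
  then have "k \<le> ((n - 1) choose (k - 1)) * (n - k)" unfolding c1 .
  then have "k \<le> (n - k) * ((n - 1) choose (k - 1))" by (simp only: mult.commute)
  then have q2k: "q \<ge> 2 * k" using q by linarith
  have S: "(\<Sum>j\<in>{1..k}. (n choose j) * q ^ (j - 1)) \<le> 2 * (n choose k) * q ^ (k - 1)"
    using sum_bound_step[OF q2k, of k n] k1 nk by simp
  have kC: "k * (n choose k) = n * ((n - 1) choose (k - 1))" using times_binomial_minus1_eq[of k n] k1 by simp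
  have nle: "n \<le> k * (n - k)"
  proof -
    have "n - k \<ge> 3" using nk by simp
    then have "(k - 1) * (n - k) \<ge> (k - 1) * 3" by (rule mult_le_mono2)
    then have "(k - 1) * (n - k) \<ge> k" using k2 by linarith
    then have "k * (n - k) \<ge> (n - k) + k" using k2 by (cases k) auto
    then show ?thesis using nk by linarith
  qed
  have "k * (2 * (n choose k)) = 2 * n * ((n - 1) choose (k - 1))" using kC by simp
  also have "\<dots> \<le> 2 * (k * (n - k)) * ((n - 1) choose (k - 1))" using nle by simp
  also have "\<dots> = k * (2 * (n - k) * ((n - 1) choose (k - 1)))" by simp
  also have "\<dots> < k * q" using q k1 by simp
  finally have "2 * (n choose k) < q" by simp
  then have "2 * (n choose k) * q ^ (k - 1) < q * q ^ (k - 1)" using q by simp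
  also have "q * q ^ (k - 1) = q ^ k" using k1 by (cases k) auto
  finally show ?thesis using S by linarith
qed
lemma q_gt_n:
  fixes q n k :: nat
  assumes q: "q > 2 * (n - k) * ((n - 1) choose (k - 1))" and k1: "k \<ge> 1" and nk: "n \<ge> k + 3"
  shows "q > n"
proof -
  have c1: "((n - 1) choose k) * k = ((n - 1) choose (k - 1)) * (n - k)"
    using binom_step[of "n - 1" "k - 1"] k1 by (simp add: Suc_diff_le)
  have "k \<le> n - 1" using nk by simp
  then have "0 < (n - 1) choose k" by (rule zero_less_binomial)
  then have "((n - 1) choose k) \<ge> 1" by linarith
  then have "k \<le> ((n - 1) choose k) * k" by simp
  then have "k \<le> ((n - 1) choose (k - 1)) * (n - k)" unfolding c1 .
  then have a: "k \<le> (n - k) * ((n - 1) choose (k - 1))" by (simp only: mult.commute)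
  have "k - 1 \<le> n - 1" using nk by simp
  then have "0 < (n - 1) choose (k - 1)" by (rule zero_less_binomial)
  then have "1 \<le> (n - 1) choose (k - 1)" by linarith
  then have "(n - k) * 1 \<le> (n - k) * ((n - 1) choose (k - 1))" by (rule mult_le_mono2)
  then have "n - k \<le> (n - k) * ((n - 1) choose (k - 1))" by simp
  then show ?thesis using a q nk by linarith
qed

abbreviation bs where "bs l r i \<equiv> blk_start l r i"

lemma bs_Suc: "blk_start l r (Suc i) = blk_start l r i + (r i + l)"
  by (simp add: blk_start_def)

lemma bs_mono: "i \<le> i' \<Longrightarrow> blk_start l r i \<le> blk_start l r i'"
  unfolding blk_start_def by (rule sum_mono2) auto

lemma blk_disj: "i \<noteq> i' \<Longrightarrow> blk l r i \<inter> blk l r i' = {}"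
proof -
  have *: "blk l r i \<inter> blk l r i' = {}" if "i < i'" for i i'
  proof -
    have "blk_start l r (Suc i) \<le> blk_start l r i'" using that by (intro bs_mono) simp
    then show ?thesis by (auto simp: blk_def bs_Suc)
  qed
  assume "i \<noteq> i'"
  then show ?thesis using *[of i i'] *[of i' i] by (cases "i < i'") auto
qed

lemma blk_union: "(\<Union>i<m. blk l r i) = {0..<blk_start l r m}"
proof (induction m)
  case 0 then show ?case by (simp add: blk_start_def)
next
  case (Suc m)
  have "(\<Union>i<Suc m. blk l r i) = (\<Union>i<m. blk l r i) \<union> blk l r m"
    by (simp add: lessThan_Suc Un_commute)
  also have "\<dots> = {0..<blk_start l r (Suc m)}" using Suc by (auto simp: blk_def bs_Suc)
  finally show ?case .
qed

lemma bs_m: "blk_start l r m = (\<Sum>i<m. r i + l)" by (simp add: blk_start_def)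

lemma card_blk: "card (blk l r i) = r i + l" by (simp add: blk_def)

lemma finite_blk: "finite (blk l r i)" by (simp add: blk_def)

locale pm =
  fixes m l n k :: nat and r :: "nat \<Rightarrow> nat" and w :: "nat \<Rightarrow> 'a::{finite,field}"
  assumes n_eq: "n = (\<Sum>i<m. r i + l)"
    and l1: "l \<ge> 1" and kl: "l \<le> k" and kml: "k < m * l"
    and winj: "inj_on w {0..<n}" and wnz: "\<forall>j<n. w j \<noteq> 0"
    and num: "(\<Sum>j\<in>{1..k}. (n choose j) * card (UNIV::'a set) ^ (j - 1)) < card (UNIV::'a set) ^ k"
begin

abbreviation B where "B i \<equiv> blk l r i"

definition col :: "(nat \<Rightarrow> nat \<Rightarrow> nat \<Rightarrow> 'a) \<Rightarrow> nat \<Rightarrow> nat \<Rightarrow> 'a" where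
  "col F j = (\<lambda>s. \<Sum>i<m. if j \<in> B i then (\<Sum>t<l. w j ^ t * F i t s) else 0)"

definition adm :: "(nat \<Rightarrow> nat) \<Rightarrow> nat set \<Rightarrow> bool" where
  "adm cap T \<longleftrightarrow> T \<subseteq> {0..<n} \<and> card T \<le> k \<and> (\<forall>i<m. card (T \<inter> B i) \<le> cap i)"

definition Inv :: "(nat \<Rightarrow> nat \<Rightarrow> nat \<Rightarrow> 'a) \<Rightarrow> (nat \<Rightarrow> nat) \<Rightarrow> bool" where
  "Inv F cap \<longleftrightarrow> (\<forall>i t. F i t \<in> XX k) \<and> (\<forall>i t. cap i \<le> t \<longrightarrow> F i t = 0) \<and> (\<forall>T. adm cap T \<longrightarrow> indep (col F) T)"

lemma union_B: "(\<Union>i<m. B i) = {0..<n}"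
  using blk_union[where m=m and l=l and r=r] bs_m[where m=m and l=l and r=r] n_eq by simp

lemma B_sub: "i < m \<Longrightarrow> B i \<subseteq> {0..<n}"
  using union_B by blast

lemma col_blk:
  assumes i: "i < m" and j: "j \<in> B i"
  shows "col F j s = (\<Sum>t<l. w j ^ t * F i t s)"
proof -
  define g where "g i' = (if j \<in> B i' then (\<Sum>t<l. w j ^ t * F i' t s) else 0)" for i'
  have "col F j s = sum g {..<m}" unfolding col_def g_def by simp
  also have "\<dots> = g i + sum g ({..<m} - {i})" using sum.remove[of "{..<m}" i g] i by simp
  also have "sum g ({..<m} - {i}) = 0"
  proof (intro sum.neutral ballI)
    fix i' assume "i' \<in> {..<m} - {i}"
    then have "i' \<noteq> i" by simp
    then have "j \<notin> B i'" using blk_disj[of i i' l r] j by blast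
    then show "g i' = 0" by (simp add: g_def)
  qed
  finally show ?thesis using j by (simp add: g_def)
qed

lemma col_out: "j \<notin> {0..<n} \<Longrightarrow> col F j s = 0"
  unfolding col_def using union_B by (intro sum.neutral) auto

lemma col_XX: "(\<forall>i t. F i t \<in> XX k) \<Longrightarrow> col F j \<in> XX k"
  by (auto simp: col_def XX_def intro!: sum.neutral)

lemma col_upd:
  assumes i: "i < m" and u: "u < l" and F0: "F i u = 0"
  shows "col (F(i := (F i)(u := f))) j s = col F j s + (if j \<in> B i then w j ^ u * f s else 0)"
proof -
  let ?F' = "F(i := (F i)(u := f))"
  have Fe: "?F' i' t s = F i' t s + (if i' = i \<and> t = u then f s else 0)" for i' t
    using F0 by auto
  have inner: "(\<Sum>t<l. w j ^ t * ?F' i' t s) = (\<Sum>t<l. w j ^ t * F i' t s) + (if i' = i then w j ^ u * f s else 0)" for i'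
  proof -
    have "(\<Sum>t<l. w j ^ t * ?F' i' t s) = (\<Sum>t<l. w j ^ t * F i' t s + (if t = u then (if i' = i then w j ^ t * f s else 0) else 0))"
      by (intro sum.cong) (auto simp: Fe distrib_left F0)
    also have "\<dots> = (\<Sum>t<l. w j ^ t * F i' t s) + (\<Sum>t<l. if t = u then (if i' = i then w j ^ t * f s else 0) else 0)"
      by (rule sum.distrib)
    also have "(\<Sum>t<l. if t = u then (if i' = i then w j ^ t * f s else 0) else 0) = (if i' = i then w j ^ u * f s else 0)"
      using u by (simp add: sum.delta)
    finally show ?thesis .
  qed
  have "col ?F' j s = (\<Sum>i'<m. (if j \<in> B i' then (\<Sum>t<l. w j ^ t * F i' t s) else 0) + (if i' = i then (if j \<in> B i then w j ^ u * f s else 0) else 0))"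
    unfolding col_def inner by (intro sum.cong) auto
  also have "\<dots> = col F j s + (if j \<in> B i then w j ^ u * f s else 0)"
    unfolding col_def sum.distrib using i by (simp add: sum.delta)
  finally show ?thesis .
qed

lemma lcomb_split:
  assumes "finite T" "A \<subseteq> T"
  shows "lcomb h T c = (\<lambda>s. lcomb h A c s + lcomb h (T - A) c s)"
  unfolding lcomb_def by (rule ext) (simp add: sum.subset_diff[OF assms(2) assms(1)] add.commute)

lemma lcomb_cong: "(\<And>j. j \<in> T \<Longrightarrow> c j = c' j) \<Longrightarrow> lcomb h T c = lcomb h T c'"
  unfolding lcomb_def by (intro ext sum.cong) auto

lemma adm_finite: "adm cap T \<Longrightarrow> finite T"
  unfolding adm_def using finite_subset by blast

lemma Inv_indep: "Inv F cap \<Longrightarrow> adm cap T \<Longrightarrow> indep (col F) T"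
  unfolding Inv_def by blast

lemma swap_lemma:
  fixes a :: "nat \<Rightarrow> 'b::comm_ring_1"
  shows "(\<Sum>j\<in>A. a j * (\<Sum>t<u. b j t * X t)) = (\<Sum>t<u. (\<Sum>j\<in>A. a j * b j t) * X t)"
proof -
  have "(\<Sum>j\<in>A. a j * (\<Sum>t<u. b j t * X t)) = (\<Sum>j\<in>A. \<Sum>t<u. a j * (b j t * X t))"
    by (simp add: sum_distrib_left)
  also have "\<dots> = (\<Sum>t<u. \<Sum>j\<in>A. a j * (b j t * X t))" by (rule sum.swap)
  also have "\<dots> = (\<Sum>t<u. (\<Sum>j\<in>A. a j * b j t) * X t)"
    by (simp add: sum_distrib_right mult.assoc)
  finally show ?thesis .
qed

lemma key_dep:
  assumes Inv: "Inv F cap" and i: "i < m" and capi: "cap i = u" and u: "u < l"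
    and adm': "adm (cap(i := Suc u)) T"
    and lam0: "(\<Sum>j\<in>T \<inter> B i. c j * w j ^ u) = 0"
    and lc0: "lcomb (col F) T c = (\<lambda>_. 0)"
  shows "\<forall>j\<in>T. c j = 0"
proof -
  have fT: "finite T" using adm' adm_finite by blast
  have Tn: "T \<subseteq> {0..<n}" using adm' unfolding adm_def by blast
  have cT: "card T \<le> k" using adm' unfolding adm_def by blast
  have capo: "\<And>i'. i' < m \<Longrightarrow> i' \<noteq> i \<Longrightarrow> card (T \<inter> B i') \<le> cap i'"
    using adm' unfolding adm_def by auto
  define Ti where "Ti = T \<inter> B i"
  have TiT: "Ti \<subseteq> T" by (simp add: Ti_def)
  have fTi: "finite Ti" using fT TiT finite_subset by blast
  have cTi_le: "card Ti \<le> Suc u" using adm' i unfolding adm_def Ti_def by auto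
  have F0: "\<And>t. u \<le> t \<Longrightarrow> F i t = 0" using Inv capi unfolding Inv_def by blast
  have colTi: "col F j s = (\<Sum>t<u. w j ^ t * F i t s)" if "j \<in> Ti" for j s
  proof -
    have "col F j s = (\<Sum>t<l. w j ^ t * F i t s)" using col_blk[OF i] that by (simp add: Ti_def)
    also have "\<dots> = (\<Sum>t<u. w j ^ t * F i t s)"
      using u F0 by (intro sum.mono_neutral_right) auto
    finally show ?thesis .
  qed
  have lcTi: "lcomb (col F) A a s = (\<Sum>t<u. (\<Sum>j\<in>A. a j * w j ^ t) * F i t s)" if "A \<subseteq> Ti" for A a s
  proof -
    have "lcomb (col F) A a s = (\<Sum>j\<in>A. a j * (\<Sum>t<u. w j ^ t * F i t s))"
      unfolding lcomb_def using colTi that by (intro sum.cong) auto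
    then show ?thesis by (simp add: swap_lemma)
  qed
  have admrest: "adm cap (T - Ti)"
    unfolding adm_def
  proof (intro conjI allI impI)
    show "T - Ti \<subseteq> {0..<n}" using Tn by blast
    show "card (T - Ti) \<le> k" using cT card_mono[OF fT, of "T - Ti"] by auto
    fix i' assume i': "i' < m"
    show "card ((T - Ti) \<inter> B i') \<le> cap i'"
    proof (cases "i' = i")
      case True
      then have "(T - Ti) \<inter> B i' = {}" by (auto simp: Ti_def)
      then show ?thesis by simp
    next
      case False
      have "card ((T - Ti) \<inter> B i') \<le> card (T \<inter> B i')" using fT by (intro card_mono) auto
      then show ?thesis using capo[OF i' False] by simp
    qed
  qed
  have cTi: "\<forall>j\<in>Ti. c j = 0"
  proof (cases "card Ti \<le> u")
    case True
    have "adm cap T"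
      unfolding adm_def
    proof (intro conjI allI impI)
      fix i' assume i': "i' < m"
      show "card (T \<inter> B i') \<le> cap i'"
        using True capi capo[OF i'] by (cases "i' = i") (auto simp: Ti_def)
    qed (use Tn cT in auto)
    then have "indep (col F) T" using Inv_indep[OF Inv] by blast
    then show ?thesis using lc0 TiT unfolding indep_def by blast
  next
    case False
    then have cTi: "card Ti = Suc u" using cTi_le by simp
    have injTi: "inj_on w Ti" using winj Tn TiT by (meson inj_on_subset subset_trans)
    define wv where "wv t = (if t < u then (\<Sum>j\<in>Ti. c j * w j ^ t) else 0)" for t
    show ?thesis
    proof (cases "\<forall>t<u. wv t = 0")
      case True
      have "\<forall>t<Suc u. (\<Sum>j\<in>Ti. c j * w j ^ t) = 0"
      proof (intro allI impI)
        fix t assume "t < Suc u"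
        then consider "t < u" | "t = u" by linarith
        then show "(\<Sum>j\<in>Ti. c j * w j ^ t) = 0"
        proof cases
          case 1 then show ?thesis using True by (simp add: wv_def)
        next
          case 2 then show ?thesis using lam0 by (simp add: Ti_def)
        qed
      qed
      then show ?thesis using vdm_indep[OF fTi injTi, of "Suc u" c] cTi by simp
    next
      case False
      then obtain t0 where t0: "t0 < u" "wv t0 \<noteq> 0" by blast
      have "Ti \<noteq> {}" using cTi by auto
      then obtain j1 where j1: "j1 \<in> Ti" by blast
      define Ti' where "Ti' = Ti - {j1}"
      have fTi': "finite Ti'" using fTi by (simp add: Ti'_def)
      have cTi': "card Ti' = u" using cTi j1 fTi by (simp add: Ti'_def)
      have Ti'Ti: "Ti' \<subseteq> Ti" by (auto simp: Ti'_def)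
      define V where "V j = (\<lambda>t. if t < u then w j ^ t else (0::'a))" for j
      have VX: "V j \<in> XX u" for j by (simp add: V_def XX_def)
      have indV: "indep V Ti'"
        unfolding indep_def
      proof (intro allI impI)
        fix d assume d: "lcomb V Ti' d = (\<lambda>_. 0)"
        have "\<forall>t<u. (\<Sum>j\<in>Ti'. d j * w j ^ t) = 0"
        proof (intro allI impI)
          fix t assume t: "t < u"
          have "(\<Sum>j\<in>Ti'. d j * w j ^ t) = lcomb V Ti' d t" unfolding lcomb_def V_def using t by simp
          then show "(\<Sum>j\<in>Ti'. d j * w j ^ t) = 0" using d by simp
        qed
        then show "\<forall>j\<in>Ti'. d j = 0"
          using vdm_indep[OF fTi' inj_on_subset[OF injTi Ti'Ti], of u d] cTi' by simp
      qed
      have wvX: "wv \<in> XX u" by (simp add: wv_def XX_def)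
      obtain d where d: "wv = lcomb V Ti' d" using span_all[OF VX fTi' cTi' indV wvX] by blast
      have wvd: "wv t = (\<Sum>j\<in>Ti'. d j * w j ^ t)" if "t < u" for t
        using fun_cong[OF d, of t] that by (simp add: lcomb_def V_def)
      define c'' where "c'' j = (if j \<in> Ti' then d j else c j)" for j
      define T' where "T' = (T - Ti) \<union> Ti'"
      have fT': "finite T'" using fT fTi' by (simp add: T'_def)
      have lcT': "lcomb (col F) T' c'' = (\<lambda>_. 0)"
      proof
        fix s
        have "lcomb (col F) T' c'' s = lcomb (col F) (T - Ti) c'' s + lcomb (col F) Ti' c'' s"
          unfolding lcomb_def T'_def using fT fTi' Ti'Ti by (subst sum.union_disjoint) auto
        also have "lcomb (col F) (T - Ti) c'' = lcomb (col F) (T - Ti) c"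
          using Ti'Ti by (intro lcomb_cong) (auto simp: c''_def)
        also have "lcomb (col F) Ti' c'' = lcomb (col F) Ti' d"
          by (intro lcomb_cong) (auto simp: c''_def)
        also have "lcomb (col F) Ti' d s = (\<Sum>t<u. wv t * F i t s)"
          using lcTi[OF Ti'Ti, of d s] wvd by simp
        also have "(\<Sum>t<u. wv t * F i t s) = lcomb (col F) Ti c s"
          using lcTi[OF subset_refl, of c s] by (simp add: wv_def)
        also have "lcomb (col F) (T - Ti) c s + lcomb (col F) Ti c s = lcomb (col F) T c s"
          using lcomb_split[OF fT TiT, of "col F" c] by simp
        finally show "lcomb (col F) T' c'' s = 0" using lc0 by simp
      qed
      have admT': "adm cap T'"
        unfolding adm_def
      proof (intro conjI allI impI)
        have T'T: "T' \<subseteq> T" using Ti'Ti TiT by (auto simp: T'_def)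
        show "T' \<subseteq> {0..<n}" using T'T Tn by blast
        show "card T' \<le> k" using card_mono[OF fT T'T] cT by simp
        fix i' assume i': "i' < m"
        show "card (T' \<inter> B i') \<le> cap i'"
        proof (cases "i' = i")
          case True
          have "T' \<inter> B i' = Ti'" using True Ti'Ti by (auto simp: T'_def Ti_def)
          then show ?thesis using cTi' capi True by simp
        next
          case False
          have "card (T' \<inter> B i') \<le> card (T \<inter> B i')" using fT T'T by (intro card_mono) auto
          then show ?thesis using capo[OF i' False] by simp
        qed
      qed
      have "\<forall>j\<in>T'. c'' j = 0" using Inv_indep[OF Inv admT'] lcT' unfolding indep_def by blast
      then have "\<forall>j\<in>Ti'. d j = 0"
      proof (intro ballI)
        fix j assume h: "\<forall>j\<in>T'. c'' j = 0" and j: "j \<in> Ti'"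
        then have "c'' j = 0" by (simp add: T'_def)
        then show "d j = 0" using j by (simp add: c''_def)
      qed
      then have "wv t0 = 0" using wvd[OF t0(1)] by simp
      then show ?thesis using t0 by simp
    qed
  qed
  have "lcomb (col F) (T - Ti) c = (\<lambda>_. 0)"
  proof
    fix s
    have "lcomb (col F) Ti c s = 0" unfolding lcomb_def using cTi by simp
    then show "lcomb (col F) (T - Ti) c s = 0"
      using fun_cong[OF lcomb_split[OF fT TiT, of "col F" c], of s] fun_cong[OF lc0, of s] by simp
  qed
  then have "\<forall>j\<in>T - Ti. c j = 0" using Inv_indep[OF Inv admrest] unfolding indep_def by blast
  then show ?thesis using cTi by blast
qed

definition lam :: "nat \<Rightarrow> nat \<Rightarrow> nat set \<Rightarrow> (nat \<Rightarrow> 'a) \<Rightarrow> 'a" where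
  "lam i u T c = (\<Sum>j\<in>T \<inter> B i. c j * w j ^ u)"

definition Bad :: "(nat \<Rightarrow> nat \<Rightarrow> nat \<Rightarrow> 'a) \<Rightarrow> nat \<Rightarrow> nat \<Rightarrow> nat set \<Rightarrow> (nat \<Rightarrow> 'a) set" where
  "Bad F i u T = (\<lambda>c. - lcomb (col F) T c) ` {c \<in> PiE T (\<lambda>_. UNIV). lam i u T c = 1}"

lemma card_Bad:
  assumes fT: "finite T" and Tn: "T \<subseteq> {0..<n}" and j0: "j0 \<in> T \<inter> B i"
  shows "card (Bad F i u T) \<le> card (UNIV::'a set) ^ (card T - 1)"
proof -
  let ?D = "{c \<in> PiE T (\<lambda>_. UNIV). lam i u T c = 1}"
  have finD: "finite ?D" using fT by (simp add: finite_PiE)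
  have wj0: "w j0 ^ u \<noteq> 0" using wnz j0 Tn by auto
  have fTB: "finite (T \<inter> B i)" using fT by simp
  have lamsplit: "lam i u T c = c j0 * w j0 ^ u + (\<Sum>j\<in>T \<inter> B i - {j0}. c j * w j ^ u)" for c
    unfolding lam_def using sum.remove[OF fTB j0] by simp
  have inj: "inj_on (\<lambda>c. restrict c (T - {j0})) ?D"
  proof (rule inj_onI)
    fix c c' assume c: "c \<in> ?D" and c': "c' \<in> ?D" and e: "restrict c (T - {j0}) = restrict c' (T - {j0})"
    have eq: "c j = c' j" if "j \<in> T - {j0}" for j using fun_cong[OF e, of j] that by simp
    have "(\<Sum>j\<in>T \<inter> B i - {j0}. c j * w j ^ u) = (\<Sum>j\<in>T \<inter> B i - {j0}. c' j * w j ^ u)"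
      using eq by (intro sum.cong) auto
    moreover have "lam i u T c = lam i u T c'" using c c' by simp
    ultimately have "c j0 * w j0 ^ u = c' j0 * w j0 ^ u" unfolding lamsplit by simp
    then have "c j0 = c' j0" using wj0 by (metis mult_cancel_right)
    show "c = c'"
    proof
      fix x show "c x = c' x"
      proof (cases "x \<in> T")
        case True then show ?thesis using eq \<open>c j0 = c' j0\<close> by (cases "x = j0") auto
      next
        case False then show ?thesis using c c' by (auto simp: PiE_def extensional_def)
      qed
    qed
  qed
  have "card (Bad F i u T) \<le> card ?D" unfolding Bad_def using finD by (rule card_image_le)
  also have "card ?D = card ((\<lambda>c. restrict c (T - {j0})) ` ?D)" using card_image[OF inj] by simp
  also have "\<dots> \<le> card (PiE (T - {j0}) (\<lambda>_. UNIV :: 'a set))"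
    by (rule card_mono) (auto simp: finite_PiE fT)
  also have "\<dots> = card (UNIV::'a set) ^ (card T - 1)" using fT j0 by (simp add: card_PiE)
  finally show ?thesis .
qed

lemma lcomb_upd:
  assumes i: "i < m" and u: "u < l" and F0: "F i u = 0" and fT: "finite T"
  shows "lcomb (col (F(i := (F i)(u := f)))) T c s = lcomb (col F) T c s + lam i u T c * f s"
proof -
  have "lcomb (col (F(i := (F i)(u := f)))) T c s = (\<Sum>j\<in>T. c j * col F j s + (if j \<in> B i then c j * w j ^ u * f s else 0))"
    unfolding lcomb_def col_upd[where F=F and i=i and u=u, OF i u F0] by (intro sum.cong) (auto simp: algebra_simps)
  also have "\<dots> = lcomb (col F) T c s + (\<Sum>j\<in>T. if j \<in> B i then c j * w j ^ u * f s else 0)"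
    unfolding lcomb_def by (rule sum.distrib)
  also have "(\<Sum>j\<in>T. if j \<in> B i then c j * w j ^ u * f s else 0) = (\<Sum>j\<in>T \<inter> B i. c j * w j ^ u * f s)"
    using sum.inter_restrict[OF fT, of "\<lambda>j. c j * w j ^ u * f s" "B i"] by simp
  also have "\<dots> = lam i u T c * f s" unfolding lam_def by (simp add: sum_distrib_right)
  finally show ?thesis .
qed

lemma step:
  assumes Inv: "Inv F cap" and i: "i < m" and capi: "cap i = u" and u: "u < l"
  shows "\<exists>f. Inv (F(i := (F i)(u := f))) (cap(i := Suc u))"
proof -
  let ?q = "card (UNIV::'a set)"
  have F0: "F i u = 0" using Inv capi unfolding Inv_def by blast
  define Fam where "Fam j = {T. T \<subseteq> {0..<n} \<and> card T = j \<and> T \<inter> B i \<noteq> {}}" for j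
  define BadAll where "BadAll = (\<Union>j\<in>{1..k}. \<Union>T\<in>Fam j. Bad F i u T)"
  have finFam: "finite (Fam j)" for j
    by (rule finite_subset[of _ "Pow {0..<n}"]) (auto simp: Fam_def)
  have cFam: "card (Fam j) \<le> n choose j" for j
  proof -
    have "card (Fam j) \<le> card {T. T \<subseteq> {0..<n} \<and> card T = j}"
      by (rule card_mono) (auto simp: Fam_def intro: finite_subset[of _ "Pow {0..<n}"])
    also have "\<dots> = n choose j" using n_subsets[of "{0..<n}" j] by simp
    finally show ?thesis .
  qed
  have cB: "card (\<Union>T\<in>Fam j. Bad F i u T) \<le> (n choose j) * ?q ^ (j - 1)" for j
  proof -
    have "card (\<Union>T\<in>Fam j. Bad F i u T) \<le> (\<Sum>T\<in>Fam j. card (Bad F i u T))"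
      by (rule card_UN_le[OF finFam])
    also have "\<dots> \<le> (\<Sum>T\<in>Fam j. ?q ^ (j - 1))"
    proof (rule sum_mono)
      fix T assume "T \<in> Fam j"
      then have T: "T \<subseteq> {0..<n}" "card T = j" "T \<inter> B i \<noteq> {}" by (auto simp: Fam_def)
      then obtain j0 where "j0 \<in> T \<inter> B i" by blast
      moreover have "finite T" using T(1) finite_subset by blast
      ultimately show "card (Bad F i u T) \<le> ?q ^ (j - 1)" using card_Bad[OF _ T(1)] T(2) by blast
    qed
    also have "\<dots> = card (Fam j) * ?q ^ (j - 1)" by simp
    also have "\<dots> \<le> (n choose j) * ?q ^ (j - 1)" using cFam by (intro mult_le_mono1) auto
    finally show ?thesis .
  qed
  have finBad: "finite (Bad F i u T)" if "finite T" for T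
    unfolding Bad_def using that by (simp add: finite_PiE)
  have finBA: "finite BadAll" unfolding BadAll_def
  proof (intro finite_UN_I finite_atLeastAtMost finFam)
    fix j T assume "T \<in> Fam j"
    then have "finite T" unfolding Fam_def using finite_subset by blast
    then show "finite (Bad F i u T)" by (rule finBad)
  qed
  have "card BadAll \<le> (\<Sum>j\<in>{1..k}. card (\<Union>T\<in>Fam j. Bad F i u T))"
    unfolding BadAll_def by (rule card_UN_le) simp
  also have "\<dots> \<le> (\<Sum>j\<in>{1..k}. (n choose j) * ?q ^ (j - 1))" by (rule sum_mono) (rule cB)
  also have "\<dots> < ?q ^ k" by (rule num)
  also have "\<dots> = card (XX k :: (nat \<Rightarrow> 'a) set)" using card_XX[where 'a='a, of k] by simp
  finally have "card BadAll < card (XX k :: (nat \<Rightarrow> 'a) set)" .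
  then have "\<not> XX k \<subseteq> BadAll" using card_mono[OF finBA] by (meson not_less)
  then obtain f where f: "f \<in> XX k" "f \<notin> BadAll" by blast
  let ?F' = "F(i := (F i)(u := f))"
  let ?cap' = "cap(i := Suc u)"
  have "Inv ?F' ?cap'"
    unfolding Inv_def
  proof (intro conjI allI impI)
    fix i' t show "?F' i' t \<in> XX k" using Inv f(1) unfolding Inv_def by auto
  next
    fix i' t assume "?cap' i' \<le> t"
    then show "?F' i' t = 0" using Inv capi unfolding Inv_def by (cases "i' = i") auto
  next
    fix T assume adm': "adm ?cap' T"
    have fT: "finite T" using adm' adm_finite by blast
    have Tn: "T \<subseteq> {0..<n}" and cT: "card T \<le> k" using adm' unfolding adm_def by auto
    show "indep (col ?F') T"
      unfolding indep_def
    proof (intro allI impI)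
      fix c assume lc: "lcomb (col ?F') T c = (\<lambda>_. 0)"
      have lcs: "lcomb (col F) T c s + lam i u T c * f s = 0" for s
        using lcomb_upd[where F=F and i=i and u=u, OF i u F0 fT, of f c s] fun_cong[OF lc, of s] by simp
      show "\<forall>j\<in>T. c j = 0"
      proof (cases "lam i u T c = 0")
        case True
        have "lcomb (col F) T c = (\<lambda>_. 0)" using lcs True by (simp add: fun_eq_iff)
        then show ?thesis using key_dep[OF Inv i capi u adm'] True unfolding lam_def by blast
      next
        case False
        define lm where "lm = lam i u T c"
        define c' where "c' = restrict (\<lambda>j. c j / lm) T"
        have c'P: "c' \<in> PiE T (\<lambda>_. UNIV)" by (simp add: c'_def)
        have "lam i u T c' = (\<Sum>j\<in>T \<inter> B i. c j * w j ^ u) / lm"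
          unfolding lam_def c'_def by (simp add: sum_divide_distrib)
        then have lam1: "lam i u T c' = 1" using False by (simp add: lm_def lam_def)
        have "- lcomb (col F) T c' = f"
        proof
          fix s
          have "lcomb (col F) T c' s = lcomb (col F) T c s / lm"
            unfolding lcomb_def c'_def by (simp add: sum_divide_distrib)
          also have "\<dots> = - f s" using lcs[of s] False unfolding lm_def
            by (simp add: field_simps eq_neg_iff_add_eq_0)
          finally show "(- lcomb (col F) T c') s = f s" by simp
        qed
        then have fB: "f \<in> Bad F i u T" unfolding Bad_def using c'P lam1 by blast
        have "T \<inter> B i \<noteq> {}" using False unfolding lam_def by auto
        moreover have "T \<noteq> {}" using calculation by blast
        then have "card T \<in> {1..k}" using fT cT by (simp add: Suc_le_eq card_gt_0_iff)
        ultimately have "f \<in> BadAll" unfolding BadAll_def Fam_def using fB Tn by blast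
        then show ?thesis using f(2) by blast
      qed
    qed
  qed
  then show ?thesis by blast
qed

lemma Inv_init: "Inv (\<lambda>_ _. 0) (\<lambda>_. 0)"
  unfolding Inv_def
proof (intro conjI allI impI)
  fix T assume a: "adm (\<lambda>_. 0) T"
  have fT: "finite T" using a adm_finite by blast
  have "T \<inter> B i = {}" if "i < m" for i
    using a that fT unfolding adm_def by auto
  moreover have "T \<subseteq> (\<Union>i<m. B i)" using a union_B unfolding adm_def by blast
  ultimately have "T = {}" by blast
  then show "indep (col (\<lambda>_ _. 0)) T" by (simp add: indep_def)
qed (auto simp: XX_def)

lemma iter_u:
  assumes Inv: "Inv F cap" and i: "i < m" and c0: "cap i = 0"
  shows "u \<le> l \<Longrightarrow> \<exists>F'. Inv F' (cap(i := u))"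
proof (induction u)
  case 0
  have "cap(i := 0) = cap" using c0 by auto
  then show ?case using Inv by auto
next
  case (Suc u)
  have "u \<le> l" using Suc.prems by simp
  then obtain F' where F': "Inv F' (cap(i := u))" using Suc.IH by blast
  have "\<exists>f. Inv (F'(i := (F' i)(u := f))) ((cap(i := u))(i := Suc u))"
    by (rule step[OF F' i]) (use Suc.prems in auto)
  then show ?case by (auto simp del: fun_upd_apply)
qed

lemma iter_i: "i \<le> m \<Longrightarrow> \<exists>F. Inv F (\<lambda>i'. if i' < i then l else 0)"
proof (induction i)
  case 0
  have "(\<lambda>i'::nat. if i' < 0 then l else 0) = (\<lambda>_. 0)" by simp
  then show ?case using Inv_init by metis
next
  case (Suc i)
  then obtain F where F: "Inv F (\<lambda>i'. if i' < i then l else 0)" by auto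
  have "\<exists>F'. Inv F' ((\<lambda>i'. if i' < i then l else 0)(i := l))"
    by (rule iter_u[OF F]) (use Suc.prems in auto)
  moreover have "(\<lambda>i'. if i' < i then l else 0)(i := l) = (\<lambda>i'. if i' < Suc i then l else 0)"
    by auto
  ultimately show ?case by auto
qed

definition admL :: "nat set \<Rightarrow> bool" where
  "admL T \<longleftrightarrow> T \<subseteq> {0..<n} \<and> card T \<le> k \<and> (\<forall>i<m. card (T \<inter> B i) \<le> l)"

lemma final_F: "\<exists>F. (\<forall>i t. F i t \<in> XX k) \<and> (\<forall>T. admL T \<longrightarrow> indep (col F) T)"
proof -
  obtain F where F: "Inv F (\<lambda>i'. if i' < m then l else 0)" using iter_i[of m] by auto
  have "adm (\<lambda>i'. if i' < m then l else 0) T" if "admL T" for T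
    using that unfolding adm_def admL_def by auto
  then show ?thesis using F unfolding Inv_def by blast
qed

definition P :: "nat \<Rightarrow> nat set" where "P i = {blk_start l r i ..< blk_start l r i + l}"

lemma P_B: "P i \<subseteq> B i" by (auto simp: P_def blk_def)

lemma card_P: "card (P i) = l" by (simp add: P_def)

lemma P_int: "i < m \<Longrightarrow> (\<Union>i'<m. P i') \<inter> B i = P i"
proof
  assume i: "i < m"
  show "(\<Union>i'<m. P i') \<inter> B i \<subseteq> P i"
  proof
    fix x assume "x \<in> (\<Union>i'<m. P i') \<inter> B i"
    then obtain i' where x: "x \<in> P i'" "x \<in> B i" by blast
    have "i' = i"
    proof (rule ccontr)
      assume "i' \<noteq> i"
      then show False using blk_disj[of i' i l r] P_B[of i'] x by blast
    qed
    then show "x \<in> P i" using x by simp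
  qed
  show "P i \<subseteq> (\<Union>i'<m. P i') \<inter> B i" using i P_B[of i] by blast
qed

lemma card_UP: "card (\<Union>i'<m. P i') = m * l"
proof -
  have "card (\<Union>i'<m. P i') = (\<Sum>i'<m. card (P i'))"
  proof (rule card_UN_disjoint)
    show "\<forall>i\<in>{..<m}. \<forall>j\<in>{..<m}. i \<noteq> j \<longrightarrow> P i \<inter> P j = {}"
    proof (intro ballI impI)
      fix i j :: nat assume "i \<noteq> j"
      then show "P i \<inter> P j = {}" using P_B[of i] P_B[of j] blk_disj[of i j l r] by blast
    qed
  qed (auto simp: P_def)
  then show ?thesis by (simp add: card_P)
qed

lemma UP_sub: "(\<Union>i'<m. P i') \<subseteq> {0..<n}"
  using P_B B_sub by blast

end

locale pm2 = pm m l n k r w for m l n k r and w :: "nat \<Rightarrow> 'a::{finite,field}" +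
  fixes F :: "nat \<Rightarrow> nat \<Rightarrow> nat \<Rightarrow> 'a"
  assumes FX: "\<forall>i t. F i t \<in> XX k" and Find: "\<forall>T. admL T \<longrightarrow> indep (col F) T"
begin

abbreviation G where "G \<equiv> col F"

lemma GX: "G j \<in> XX k" using col_XX FX by blast

lemma injT:
  assumes "admL T" "card T = k"
  shows "\<forall>y\<in>XX k. (\<forall>j\<in>T. ip k y (G j) = 0) \<longrightarrow> y = 0"
proof (intro ballI impI)
  fix y assume y: "y \<in> XX k" and v: "\<forall>j\<in>T. ip k y (G j) = 0"
  have fT: "finite T" using assms unfolding admL_def using finite_subset by blast
  show "y = 0" by (rule indep_inj[OF GX fT assms(2) _ y v]) (use Find assms in blast)
qed

lemma surjT:
  assumes T: "admL T" "card T = k"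
  shows "\<exists>x\<in>XX k. \<forall>j\<in>T. ip k x (G j) = \<beta> j"
proof -
  have fT: "finite T" using assms unfolding admL_def using finite_subset by blast
  define \<phi> where "\<phi> = (\<lambda>x::nat \<Rightarrow> 'a. restrict (\<lambda>j. ip k x (G j)) T)"
  have inj: "inj_on \<phi> (XX k)"
  proof (rule inj_onI)
    fix x y assume x: "x \<in> XX k" and y: "y \<in> XX k" and e: "\<phi> x = \<phi> y"
    have "\<forall>j\<in>T. ip k (x - y) (G j) = 0"
    proof
      fix j assume "j \<in> T"
      then show "ip k (x - y) (G j) = 0" using fun_cong[OF e, of j] by (simp add: \<phi>_def ip_diff)
    qed
    then have "x - y = 0" using injT[OF T] XX_diff[OF x y] by blast
    then show "x = y" by simp
  qed
  have sub: "\<phi> ` XX k \<subseteq> PiE T (\<lambda>_. UNIV)" by (auto simp: \<phi>_def)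
  have "card (\<phi> ` XX k) = card (PiE T (\<lambda>_. UNIV :: 'a set))"
    using card_image[OF inj] card_XX[where 'a='a, of k] T(2) fT by (simp add: card_PiE)
  then have "\<phi> ` XX k = PiE T (\<lambda>_. UNIV)"
    using card_subset_eq[OF _ sub] fT by (simp add: finite_PiE)
  moreover have "restrict \<beta> T \<in> PiE T (\<lambda>_. UNIV)" by simp
  ultimately obtain x where x: "x \<in> XX k" "\<phi> x = restrict \<beta> T" by (metis imageE)
  have "\<forall>j\<in>T. ip k x (G j) = \<beta> j"
  proof
    fix j assume "j \<in> T"
    then show "ip k x (G j) = \<beta> j" using fun_cong[OF x(2), of j] by (simp add: \<phi>_def)
  qed
  then show ?thesis using x(1) by blast
qed

lemma exists_ext:
  assumes i: "i < m"
  shows "\<exists>T. admL T \<and> card T = k \<and> P i \<subseteq> T"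
proof -
  let ?U = "\<Union>i'<m. P i'"
  have fU: "finite ?U" by (simp add: P_def)
  have PiU: "P i \<subseteq> ?U" using i by blast
  have "card (?U - P i) = m * l - l" using card_UP card_P card_Diff_subset[OF _ PiU] by (simp add: P_def)
  moreover have "k - l \<le> m * l - l" using kml by simp
  ultimately obtain R where R: "R \<subseteq> ?U - P i" "card R = k - l" "finite R"
    by (metis obtain_subset_with_card_n)
  let ?T = "P i \<union> R"
  have cT: "card ?T = k" using R card_P kl by (subst card_Un_disjoint) (auto simp: P_def)
  have TU: "?T \<subseteq> ?U" using R PiU by blast
  have "admL ?T"
    unfolding admL_def
  proof (intro conjI allI impI)
    show "?T \<subseteq> {0..<n}" using TU UP_sub by blast
    show "card ?T \<le> k" using cT by simp
    fix i' assume i': "i' < m"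
    have "?T \<inter> B i' \<subseteq> P i'" using TU P_int[OF i'] by blast
    then show "card (?T \<inter> B i') \<le> l" using card_mono[of "P i'"] card_P by (metis finite_atLeastLessThan P_def)
  qed
  then show ?thesis using cT by blast
qed

definition Vl :: "nat \<Rightarrow> nat \<Rightarrow> 'a" where "Vl j = (\<lambda>t. if t < l then w j ^ t else 0)"

lemma VlX: "Vl j \<in> XX l" by (simp add: Vl_def XX_def)

lemma Vl_indep:
  assumes S: "S \<subseteq> {0..<n}" "card S \<le> l"
  shows "indep Vl S"
  unfolding indep_def
proof (intro allI impI)
  fix d assume d: "lcomb Vl S d = (\<lambda>_. 0)"
  have fS: "finite S" using S finite_subset by blast
  have "\<forall>t<l. (\<Sum>j\<in>S. d j * w j ^ t) = 0"
  proof (intro allI impI)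
    fix t assume t: "t < l"
    have "(\<Sum>j\<in>S. d j * w j ^ t) = lcomb Vl S d t" unfolding lcomb_def Vl_def using t by simp
    then show "(\<Sum>j\<in>S. d j * w j ^ t) = 0" using d by simp
  qed
  then show "\<forall>j\<in>S. d j = 0" using vdm_indep[OF fS inj_on_subset[OF winj S(1)] S(2)] by blast
qed

lemma Vl_inj:
  assumes S: "S \<subseteq> {0..<n}" "card S = l"
  shows "\<forall>y\<in>XX l. (\<forall>j\<in>S. ip l y (Vl j) = 0) \<longrightarrow> y = 0"
proof (intro ballI impI)
  fix y assume y: "y \<in> XX l" and v: "\<forall>j\<in>S. ip l y (Vl j) = 0"
  have fS: "finite S" using S finite_subset by blast
  show "y = 0" by (rule indep_inj[OF VlX fS S(2) Vl_indep[OF S(1)] y v]) (use S in simp)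
qed

lemma ip_G:
  assumes i: "i < m" and j: "j \<in> B i"
  shows "ip k x (G j) = ip l (\<lambda>t. if t < l then ip k x (F i t) else 0) (Vl j)"
proof -
  have "ip k x (G j) = (\<Sum>s<k. x s * (\<Sum>t<l. w j ^ t * F i t s))"
    unfolding ip_def using col_blk[OF i j] by simp
  also have "\<dots> = (\<Sum>s<k. \<Sum>t<l. w j ^ t * (x s * F i t s))"
    by (simp add: sum_distrib_left algebra_simps)
  also have "\<dots> = (\<Sum>t<l. \<Sum>s<k. w j ^ t * (x s * F i t s))" by (rule sum.swap)
  also have "\<dots> = (\<Sum>t<l. w j ^ t * ip k x (F i t))" by (simp add: ip_def sum_distrib_left)
  also have "\<dots> = ip l (\<lambda>t. if t < l then ip k x (F i t) else 0) (Vl j)"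
    unfolding ip_def Vl_def by (intro sum.cong) auto
  finally show ?thesis .
qed

abbreviation CC where "CC \<equiv> code_set {0..<n} G k"

lemma local_eq:
  assumes i: "i < m"
  shows "puncture (B i) CC = code_set (B i) Vl l"
proof -
  have Bn: "B i \<subseteq> {0..<n}" using B_sub[OF i] .
  have "code_set (B i) G k = code_set (B i) Vl l"
  proof
    show "code_set (B i) G k \<subseteq> code_set (B i) Vl l"
    proof
      fix v assume "v \<in> code_set (B i) G k"
      then obtain x where x: "x \<in> XX k" "v = enc (B i) G k x" by (auto simp: code_set_def)
      define y where "y = (\<lambda>t. if t < l then ip k x (F i t) else 0)"
      have yX: "y \<in> XX l" by (simp add: y_def XX_def)
      have "enc (B i) G k x = enc (B i) Vl l y"
        unfolding enc_def y_def using ip_G[OF i] by auto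
      then show "v \<in> code_set (B i) Vl l" using x yX by (auto simp: code_set_def)
    qed
  next
    show "code_set (B i) Vl l \<subseteq> code_set (B i) G k"
    proof
      fix v assume "v \<in> code_set (B i) Vl l"
      then obtain y where y: "y \<in> XX l" "v = enc (B i) Vl l y" by (auto simp: code_set_def)
      obtain T where T: "admL T" "card T = k" "P i \<subseteq> T" using exists_ext[OF i] by blast
      obtain x where x: "x \<in> XX k" "\<forall>j\<in>T. ip k x (G j) = ip l y (Vl j)"
        using surjT[OF T(1) T(2), of "\<lambda>j. ip l y (Vl j)"] by blast
      define yx where "yx = (\<lambda>t. if t < l then ip k x (F i t) else 0)"
      have yxX: "yx \<in> XX l" by (simp add: yx_def XX_def)
      have "\<forall>j\<in>P i. ip l (yx - y) (Vl j) = 0"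
      proof
        fix j assume j: "j \<in> P i"
        then have "j \<in> B i" using P_B by blast
        then have "ip l yx (Vl j) = ip k x (G j)" using ip_G[OF i, of j x] by (simp add: yx_def)
        also have "\<dots> = ip l y (Vl j)" using x(2) T(3) j by blast
        finally show "ip l (yx - y) (Vl j) = 0" by (simp add: ip_diff)
      qed
      moreover have "P i \<subseteq> {0..<n}" using P_B Bn by blast
      ultimately have "yx - y = 0" using Vl_inj[of "P i"] card_P XX_diff[OF yxX y(1)] by blast
      then have "yx = y" by simp
      have "enc (B i) G k x = enc (B i) Vl l yx"
        unfolding enc_def yx_def using ip_G[OF i] by auto
      then have "v = enc (B i) G k x" using y(2) \<open>yx = y\<close> by simp
      then show "v \<in> code_set (B i) G k" using x(1) by (auto simp: code_set_def)
    qed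
  qed
  moreover have "puncture (B i) CC = code_set (B i) G k" by (rule puncture_code[OF Bn])
  ultimately show ?thesis by simp
qed

lemma local_mds:
  assumes i: "i < m"
  shows "mds_code (B i) l (puncture (B i) CC)"
  unfolding local_eq[OF i]
proof (rule mds_lemma[OF finite_blk l1])
  show "l \<le> card (B i)" by (simp add: card_blk)
  fix S assume "S \<subseteq> B i" "card S = l"
  then show "\<forall>y\<in>XX l. (\<forall>j\<in>S. ip l y (Vl j) = 0) \<longrightarrow> y = 0"
    using Vl_inj B_sub[OF i] by blast
qed

lemma global_mds:
  assumes E: "\<forall>i<m. E i \<subseteq> B i \<and> card (E i) = r i"
  shows "mds_code ({0..<n} - (\<Union>i<m. E i)) k (puncture ({0..<n} - (\<Union>i<m. E i)) CC)"
proof -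
  define J where "J = {0..<n} - (\<Union>i<m. E i)"
  have JB: "J \<inter> B i = B i - E i" if i: "i < m" for i
  proof
    show "J \<inter> B i \<subseteq> B i - E i" using i by (auto simp: J_def)
    show "B i - E i \<subseteq> J \<inter> B i"
    proof
      fix x assume x: "x \<in> B i - E i"
      have "x \<notin> E i'" if i': "i' < m" for i'
      proof (cases "i' = i")
        case True then show ?thesis using x by simp
      next
        case False
        then have "B i' \<inter> B i = {}" by (rule blk_disj)
        then show ?thesis using E i' x by blast
      qed
      then show "x \<in> J \<inter> B i" using x B_sub[OF i] by (auto simp: J_def)
    qed
  qed
  have Jeq: "J = (\<Union>i<m. B i - E i)"
  proof
    show "J \<subseteq> (\<Union>i<m. B i - E i)"
    proof
      fix x assume x: "x \<in> J"
      then have "x \<in> (\<Union>i<m. B i)" using union_B by (auto simp: J_def)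
      then obtain i where "i < m" "x \<in> B i" by blast
      then show "x \<in> (\<Union>i<m. B i - E i)" using JB x by blast
    qed
    show "(\<Union>i<m. B i - E i) \<subseteq> J" using JB by blast
  qed
  have cJ: "card J = m * l"
  proof -
    have "card J = (\<Sum>i<m. card (B i - E i))"
      unfolding Jeq
    proof (rule card_UN_disjoint)
      show "\<forall>i\<in>{..<m}. \<forall>j\<in>{..<m}. i \<noteq> j \<longrightarrow> (B i - E i) \<inter> (B j - E j) = {}"
        using blk_disj by blast
    qed (auto simp: finite_blk)
    also have "\<dots> = (\<Sum>i<m. l)"
    proof (rule sum.cong)
      fix i assume "i \<in> {..<m}"
      then have "E i \<subseteq> B i" "card (E i) = r i" using E by auto
      moreover have "finite (E i)" using calculation(1) finite_blk finite_subset by blast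
      ultimately show "card (B i - E i) = l" using card_Diff_subset[of "E i" "B i"] card_blk[of l r i] by simp
    qed simp
    finally show ?thesis by simp
  qed
  have Jn: "J \<subseteq> {0..<n}" by (auto simp: J_def)
  have "mds_code J k (code_set J G k)"
  proof (rule mds_lemma)
    show "finite J" using Jn finite_subset by blast
    show "1 \<le> k" using l1 kl by simp
    show "k \<le> card J" using cJ kml by simp
    fix S assume S: "S \<subseteq> J" "card S = k"
    have "admL S"
      unfolding admL_def
    proof (intro conjI allI impI)
      show "S \<subseteq> {0..<n}" using S Jn by blast
      show "card S \<le> k" using S by simp
      fix i assume i: "i < m"
      have "card (S \<inter> B i) \<le> card (B i - E i)"
        using S JB[OF i] by (intro card_mono) (auto simp: finite_blk)
      also have "\<dots> = l"
      proof -
        have "E i \<subseteq> B i" "card (E i) = r i" using E i by auto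
        moreover have "finite (E i)" using calculation(1) finite_blk finite_subset by blast
        ultimately show ?thesis using card_Diff_subset[of "E i" "B i"] card_blk[of l r i] by simp
      qed
      finally show "card (S \<inter> B i) \<le> l" .
    qed
    then show "\<forall>y\<in>XX k. (\<forall>j\<in>S. ip k y (G j) = 0) \<longrightarrow> y = 0" using injT S(2) by blast
  qed
  moreover have "puncture J CC = code_set J G k" by (rule puncture_code[OF Jn])
  ultimately show ?thesis unfolding J_def by simp
qed

lemma pmds: "is_pmds n k l m r CC"
proof -
  have m0: "0 < m" using kml by (cases m) auto
  obtain T where T: "admL T" "card T = k" using exists_ext[OF m0] by blast
  have Tn: "T \<subseteq> {0..<n}" using T unfolding admL_def by blast
  have "code_dim CC = k" by (rule code_dim_set(1)[OF _ Tn injT[OF T]]) simp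
  moreover have "linear_code {0..<n} CC" by (rule code_linear) simp
  moreover have "k < n"
  proof -
    have "m * l = (\<Sum>i<m. l)" by simp
    also have "\<dots> \<le> (\<Sum>i<m. r i + l)" by (rule sum_mono) simp
    finally show ?thesis using kml n_eq by simp
  qed
  ultimately show ?thesis unfolding is_pmds_def using n_eq local_mds global_mds by blast
qed

end

theorem corollary21:
  fixes m s l k n :: nat and r :: "nat \<Rightarrow> nat"
  assumes "m \<ge> 2" and "s \<ge> 1" and "l \<ge> 1" and "\<forall>i<m. r i \<ge> 1"
    and "k = m * l - s" and "k \<ge> l"
    and "n = (\<Sum>i<m. l + r i)"
    and "card (UNIV :: 'a::{finite,field} set) > 2 * (n - k) * ((n - 1) choose (k - 1))"
  shows "\<exists>C :: (nat \<Rightarrow> 'a) set. is_pmds n k l m r C"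
proof -
  note a = assms
  let ?q = "card (UNIV :: 'a set)"
  have neq: "n = (\<Sum>i<m. r i + l)" using a(7) by (simp add: add.commute)
  have k1: "k \<ge> 1" using a(3) a(6) by simp
  have ml2: "m * l \<ge> 2" using a(1) a(3) by (metis mult_le_mono nat_mult_1_right)
  have kml: "k < m * l" using a(5) a(2) ml2 by simp
  have "(\<Sum>i<m. l + 1) \<le> (\<Sum>i<m. l + r i)" using a(4) by (intro sum_mono) simp
  then have "m * (l + 1) \<le> n" using a(7) by simp
  then have nk: "n \<ge> k + 3" using kml a(1) by (simp add: algebra_simps)
  have num: "(\<Sum>j\<in>{1..k}. (n choose j) * ?q ^ (j - 1)) < ?q ^ k"
    by (rule numeric[OF a(8) k1 nk])
  have qn: "?q > n" by (rule q_gt_n[OF a(8) k1 nk])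
  have "card (UNIV - {0::'a}) = ?q - 1" by (simp add: card_Diff_subset)
  then have "card {0..<n} \<le> card (UNIV - {0::'a})" using qn by simp
  then obtain w :: "nat \<Rightarrow> 'a" where w: "w ` {0..<n} \<subseteq> UNIV - {0}" "inj_on w {0..<n}"
    using card_le_inj[of "{0..<n}" "UNIV - {0::'a}"] by auto
  have wnz: "\<forall>j<n. w j \<noteq> 0"
  proof (intro allI impI)
    fix j assume "j < n"
    then have "w j \<in> w ` {0..<n}" by simp
    then show "w j \<noteq> 0" using w(1) by blast
  qed
  interpret P1: pm m l n k r w
    by unfold_locales (use neq a(3) a(6) kml w(2) wnz num in auto)
  obtain F where F: "\<forall>i t. F i t \<in> XX k" "\<forall>T. P1.admL T \<longrightarrow> indep (P1.col F) T"
    using P1.final_F by blast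
  interpret P2: pm2 m l n k r w F
    by unfold_locales (use F in auto)
  show ?thesis using P2.pmds by blast
qed

end
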